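(* Let $G=(\mathcal{V},\mathcal{E})$ be a hypergraph, $P$ a pmf on $\mathcal{V}$, and $L\ge1$ an integer. Then: (i) for all $\ell\in[L+1]$, $0\le\theta^{(\ell)}_{L+1}(G,P)\le I_{L+1}(G,P)$; (ii) $0\le I_{L+1}(G,P)\le H_{L+1}(P)$; moreover $I_{L+1}(G,P)=0$ if and only if no $e\subseteq\mathrm{supp}(P)$ with $2\le|e|\le L+1$ is in $\mathcal{E}$, and $I_{L+1}(G,P)=H_{L+1}(P)$ if and only if every $e\subseteq\mathrm{supp}(P)$ with $2\le|e|\le L+1$ is in $\mathcal{E}$; (iii) for every integer $n\ge2$ and all $\ell\in[L+1]$, $\theta^{(\ell)}_{L+1}(G^n,P^n)=n\,\theta^{(\ell)}_{L+1}(G,P)$, where $P^n(v^n)=\prod_{t\in[n]}P(v_t)$ (in particular $I_{L+1}(G^n,P^n)=nI_{L+1}(G,P)$).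
   Context: Notation: $[j]=\{1,\dots,j\}$, $[i:j]=\{i,\dots,j\}$; $\log$ is base 2. A hypergraph $G=(\mathcal{V},\mathcal{E})$ has a finite vertex set $\mathcal{V}$ and edge set $\mathcal{E}\subseteq 2^{\mathcal{V}}$ with every edge of cardinality at least 2. The $n$th co-normal power $G^n$ has vertex set $\mathcal{V}^n$, and a set $\{v_1^n,\dots,v_k^n\}\subseteq\mathcal{V}^n$ of $k\ge2$ distinct elements is an edge iff for some $t\in[n]$, $\{v_{1t},\dots,v_{kt}\}\in\mathcal{E}$. For $v_{[k]}=(v_1,\dots,v_k)\in\mathcal{V}^k$ let $\sigma(v_{[k]})=\{v_1,\dots,v_k\}$, and for $S\subseteq[k]$, $v_S=(v_j)_{j\in S}$, $P(v_S)=\prod_{j\in S}P(v_j)$. Define $I_{L+1}(G,P):=-\frac1L\log\sum_{v_{[L+1]}\in\mathcal{V}^{L+1}:\,\sigma(v_{[L+1]})\notin\mathcal{E}}P(v_{[L+1]})$, $\theta^{(L+1)}_{L+1}(G,P):=I_{L+1}(G,P)$, and for $\ell\in[L]$, $\theta^{(\ell)}_{L+1}(G,P):=2I_{L+1}(G,P)+\frac1L\log\sum_{v_{[\ell]}\in\mathcal{V}^{\ell}}P(v_{[\ell]})\Big[\sum_{v_{[\ell+1:L+1]}\in\mathcal{V}^{L+1-\ell}:\,\sigma(v_{[L+1]})\notin\mathcal{E}}P(v_{[\ell+1:L+1]})\Big]^2$. The Rényi entropy of order $\alpha\ge2$ (integer) is $H_\alpha(P)=-\frac{1}{\alpha-1}\log\sum_{v}P(v)^\alpha$.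 *)

theory Defs
  imports Complex_Main
begin

definition hypergraph :: "'a set \<Rightarrow> 'a set set \<Rightarrow> bool" where
  "hypergraph V E \<longleftrightarrow> finite V \<and> (\<forall>e\<in>E. e \<subseteq> V \<and> 2 \<le> card e)"

definition pmf_on :: "'a set \<Rightarrow> ('a \<Rightarrow> real) \<Rightarrow> bool" where
  "pmf_on V P \<longleftrightarrow> (\<forall>v\<in>V. 0 \<le> P v) \<and> (\<Sum>v\<in>V. P v) = 1"

definition supp :: "'a set \<Rightarrow> ('a \<Rightarrow> real) \<Rightarrow> 'a set" where
  "supp V P = {v \<in> V. P v > 0}"

definition tuples :: "'a set \<Rightarrow> nat \<Rightarrow> 'a list set" where
  "tuples V k = {xs. set xs \<subseteq> V \<and> length xs = k}"

definition tprob :: "('a \<Rightarrow> real) \<Rightarrow> 'a list \<Rightarrow> real" where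
  "tprob P xs = prod_list (map P xs)"

definition conormal_V :: "'a set \<Rightarrow> nat \<Rightarrow> 'a list set" where
  "conormal_V V n = tuples V n"

definition conormal_E :: "'a set \<Rightarrow> 'a set set \<Rightarrow> nat \<Rightarrow> 'a list set set" where
  "conormal_E V E n = {S. S \<subseteq> tuples V n \<and> 2 \<le> card S \<and>
                          (\<exists>t<n. (\<lambda>xs. xs ! t) ` S \<in> E)}"

definition I_hg :: "nat \<Rightarrow> 'a set \<Rightarrow> 'a set set \<Rightarrow> ('a \<Rightarrow> real) \<Rightarrow> real" where
  "I_hg m V E P = - (1 / real (m - 1)) *
     log 2 (\<Sum>xs\<in>{xs \<in> tuples V m. set xs \<notin> E}. tprob P xs)"

definition theta_hg :: "nat \<Rightarrow> nat \<Rightarrow> 'a set \<Rightarrow> 'a set set \<Rightarrow> ('a \<Rightarrow> real) \<Rightarrow> real" where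
  "theta_hg m l V E P =
     (if l = m then I_hg m V E P
      else 2 * I_hg m V E P + (1 / real (m - 1)) *
        log 2 (\<Sum>xs\<in>tuples V l. tprob P xs *
           (\<Sum>ys\<in>{ys \<in> tuples V (m - l). set (xs @ ys) \<notin> E}. tprob P ys)\<^sup>2))"

definition renyi :: "nat \<Rightarrow> 'a set \<Rightarrow> ('a \<Rightarrow> real) \<Rightarrow> real" where
  "renyi \<alpha> V P = - (1 / real (\<alpha> - 1)) * log 2 (\<Sum>v\<in>V. P v ^ \<alpha>)"

end

theory Submission
  imports Defs
begin


definition nonedge :: "'b set set \<Rightarrow> 'b list \<Rightarrow> real" where
  "nonedge E xs = (if set xs \<notin> E then 1 else 0)"

abbreviation col :: "nat \<Rightarrow> 'b list list \<Rightarrow> 'b list" where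
  "col t X \<equiv> map (\<lambda>x. x ! t) X"

lemma finite_tuples: "finite V \<Longrightarrow> finite (tuples V k)"
  unfolding tuples_def by (rule finite_lists_length_eq)

lemma tuples_0: "tuples V 0 = {[]}" unfolding tuples_def by auto

lemma tuples_Suc: "tuples V (Suc k) = (\<lambda>(x,xs). x#xs) ` (V \<times> tuples V k)"
  unfolding tuples_def by (auto simp: length_Suc_conv image_iff)

lemma sum_tuples_Suc:
  assumes "finite V"
  shows "(\<Sum>xs\<in>tuples V (Suc k). f xs) = (\<Sum>x\<in>V. \<Sum>xs\<in>tuples V k. f (x#xs))"
proof -
  have inj: "inj_on (\<lambda>(x,xs). x#xs) (V \<times> tuples V k)" by (auto simp: inj_on_def)
  have "(\<Sum>xs\<in>tuples V (Suc k). f xs) = (\<Sum>(x,xs)\<in>V \<times> tuples V k. f (x # xs))"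
    unfolding tuples_Suc by (subst sum.reindex[OF inj]) (simp add: case_prod_beta)
  also have "\<dots> = (\<Sum>x\<in>V. \<Sum>xs\<in>tuples V k. f (x#xs))"
    by (rule sum.cartesian_product[symmetric])
  finally show ?thesis .
qed

lemma sum_prod_tuples:
  assumes "finite W"
  shows "(\<Sum>Z\<in>tuples W n. \<Prod>t<n. G t (Z!t)) = (\<Prod>t<n. \<Sum>w\<in>W. (G t w :: real))"
proof (induction n arbitrary: G)
  case 0 show ?case by (simp add: tuples_0)
next
  case (Suc n)
  have "(\<Sum>Z\<in>tuples W (Suc n). \<Prod>t<Suc n. G t (Z!t))
      = (\<Sum>w\<in>W. \<Sum>Z\<in>tuples W n. G 0 w * (\<Prod>t<n. G (Suc t) (Z!t)))"
    by (simp del: prod.lessThan_Suc add: sum_tuples_Suc[OF assms] prod.lessThan_Suc_shift)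
  also have "\<dots> = (\<Sum>w\<in>W. G 0 w * (\<Sum>Z\<in>tuples W n. \<Prod>t<n. G (Suc t) (Z!t)))"
    by (simp add: sum_distrib_left)
  also have "\<dots> = (\<Sum>w\<in>W. G 0 w) * (\<Prod>t<n. \<Sum>w\<in>W. G (Suc t) w)"
    using Suc.IH[of "\<lambda>t. G (Suc t)"] by (simp add: sum_distrib_right)
  also have "\<dots> = (\<Prod>t<Suc n. \<Sum>w\<in>W. G t w)" by (simp del: prod.lessThan_Suc add: prod.lessThan_Suc_shift)
  finally show ?case .
qed

lemma sum_cols:
  assumes "finite V"
  shows "(\<Sum>X\<in>tuples (tuples V n) m. \<Prod>t<n. F t (col t X)) = (\<Prod>t<n. \<Sum>zs\<in>tuples V m. (F t zs :: real))"
proof (induction m arbitrary: F)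
  case 0 show ?case by (simp add: tuples_0)
next
  case (Suc m)
  have fin: "finite (tuples V n)" by (rule finite_tuples[OF assms])
  have "(\<Sum>X\<in>tuples (tuples V n) (Suc m). \<Prod>t<n. F t (col t X))
      = (\<Sum>x\<in>tuples V n. \<Sum>X\<in>tuples (tuples V n) m. \<Prod>t<n. F t ((x!t) # col t X))"
    by (simp add: sum_tuples_Suc[OF fin])
  also have "\<dots> = (\<Sum>x\<in>tuples V n. \<Prod>t<n. \<Sum>zs\<in>tuples V m. F t ((x!t) # zs))"
  proof (rule sum.cong[OF refl])
    fix x show "(\<Sum>X\<in>tuples (tuples V n) m. \<Prod>t<n. F t ((x!t) # col t X)) = (\<Prod>t<n. \<Sum>zs\<in>tuples V m. F t ((x!t) # zs))"
      using Suc.IH[of "\<lambda>t zs. F t (x!t # zs)"] by simp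
  qed
  also have "\<dots> = (\<Prod>t<n. \<Sum>v\<in>V. \<Sum>zs\<in>tuples V m. F t (v # zs))"
    by (rule sum_prod_tuples[OF assms])
  also have "\<dots> = (\<Prod>t<n. \<Sum>zs\<in>tuples V (Suc m). F t zs)"
    by (simp add: sum_tuples_Suc[OF assms])
  finally show ?case .
qed

lemma tprob_append: "tprob P (xs @ ys) = tprob P xs * tprob P ys"
  by (simp add: tprob_def)

lemma tprob_nth: "tprob P xs = (\<Prod>t<length xs. P (xs!t))"
  by (induction xs) (simp_all del: prod.lessThan_Suc add: tprob_def prod.lessThan_Suc_shift)

lemma tprob_cols: "(\<forall>x\<in>set X. length x = n) \<Longrightarrow> tprob (tprob P) X = (\<Prod>t<n. tprob P (col t X))"
proof (induction X)
  case Nil show ?case by (simp add: tprob_def)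
next
  case (Cons x X)
  have "tprob (tprob P) (x#X) = tprob P x * tprob (tprob P) X" by (simp add: tprob_def)
  also have "\<dots> = (\<Prod>t<n. P (x!t)) * (\<Prod>t<n. tprob P (col t X))"
    using Cons by (simp add: tprob_nth)
  also have "\<dots> = (\<Prod>t<n. tprob P (col t (x#X)))"
    by (simp add: prod.distrib[symmetric] tprob_def)
  finally show ?case .
qed

lemma tprob_nonneg: "set xs \<subseteq> V \<Longrightarrow> \<forall>v\<in>V. 0 \<le> P v \<Longrightarrow> 0 \<le> tprob P xs"
  unfolding tprob_def by (rule prod_list_nonneg) auto

lemma sum_tprob: "finite V \<Longrightarrow> pmf_on V P \<Longrightarrow> (\<Sum>xs\<in>tuples V k. tprob P xs) = 1"
proof (induction k)
  case 0 thus ?case by (simp add: tuples_0 tprob_def)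
next
  case (Suc k)
  have "(\<Sum>xs\<in>tuples V (Suc k). tprob P xs) = (\<Sum>x\<in>V. P x * (\<Sum>xs\<in>tuples V k. tprob P xs))"
    using Suc.prems by (simp add: sum_tuples_Suc tprob_def sum_distrib_left)
  thus ?case using Suc by (simp add: pmf_on_def)
qed

lemma sum_tuples_add:
  assumes "finite V"
  shows "(\<Sum>zs\<in>tuples V (a+b). f zs) = (\<Sum>x\<in>tuples V a. \<Sum>y\<in>tuples V b. f (x@y))"
proof (induction a arbitrary: f)
  case 0 show ?case by (simp add: tuples_0)
next
  case (Suc a)
  have "(\<Sum>zs\<in>tuples V (Suc a + b). f zs) = (\<Sum>v\<in>V. \<Sum>zs\<in>tuples V (a+b). f (v#zs))"
    by (simp add: sum_tuples_Suc[OF assms])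
  also have "\<dots> = (\<Sum>v\<in>V. \<Sum>x\<in>tuples V a. \<Sum>y\<in>tuples V b. f (v#x@y))"
    using Suc.IH by simp
  also have "\<dots> = (\<Sum>x\<in>tuples V (Suc a). \<Sum>y\<in>tuples V b. f (x@y))"
    by (simp add: sum_tuples_Suc[OF assms])
  finally show ?case .
qed

lemma conormal_nonedge:
  assumes hg: "hypergraph V E" and X: "set X \<subseteq> tuples V n"
  shows "(set X \<notin> conormal_E V E n) \<longleftrightarrow> (\<forall>t<n. set (col t X) \<notin> E)"
proof -
  have "set X \<in> conormal_E V E n \<longleftrightarrow> (\<exists>t<n. (\<lambda>x. x!t) ` set X \<in> E)"
  proof
    assume "\<exists>t<n. (\<lambda>x. x!t) ` set X \<in> E"
    then obtain t where t: "t<n" "(\<lambda>x. x!t) ` set X \<in> E" by blast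
    hence "2 \<le> card ((\<lambda>x. x!t) ` set X)" using hg by (auto simp: hypergraph_def)
    also have "\<dots> \<le> card (set X)" by (rule card_image_le) simp
    finally show "set X \<in> conormal_E V E n" using t X by (auto simp: conormal_E_def)
  qed (auto simp: conormal_E_def)
  thus ?thesis by auto
qed

lemma if_all_prod: "(if \<forall>t<(n::nat). Q t then 1 else 0::real) = (\<Prod>t<n. if Q t then 1 else 0)"
  by (induction n) (auto simp: less_Suc_eq)

lemma jensen:
  assumes "finite A" "\<forall>x\<in>A. 0 \<le> p x" "(\<Sum>x\<in>A. p x) = 1"
  shows "(\<Sum>x\<in>A. p x * g x)\<^sup>2 \<le> (\<Sum>x\<in>A. p x * (g x)\<^sup>2 :: real)"
proof -
  define S where "S = (\<Sum>x\<in>A. p x * g x)"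
  have "0 \<le> (\<Sum>x\<in>A. p x * (g x - S)\<^sup>2)" using assms by (intro sum_nonneg) auto
  also have "\<dots> = (\<Sum>x\<in>A. p x * (g x)\<^sup>2) - 2 * S * (\<Sum>x\<in>A. p x * g x) + S\<^sup>2 * (\<Sum>x\<in>A. p x)"
    by (simp add: power2_diff algebra_simps sum.distrib sum_subtractf sum_distrib_left sum_distrib_right)
  finally show ?thesis using assms(3) by (simp add: S_def power2_eq_square)
qed

lemma tuples_char:
  assumes "finite V" "1 \<le> m"
  shows "(\<forall>xs\<in>tuples V m. \<Phi> (set xs)) \<longleftrightarrow> (\<forall>e. e \<subseteq> V \<and> e \<noteq> {} \<and> card e \<le> m \<longrightarrow> \<Phi> e)"
proof
  assume H: "\<forall>xs\<in>tuples V m. \<Phi> (set xs)"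
  show "\<forall>e. e \<subseteq> V \<and> e \<noteq> {} \<and> card e \<le> m \<longrightarrow> \<Phi> e"
  proof (intro allI impI)
    fix e assume e: "e \<subseteq> V \<and> e \<noteq> {} \<and> card e \<le> m"
    hence "finite e" using assms finite_subset by blast
    then obtain ys where ys: "set ys = e" "distinct ys" using finite_distinct_list by blast
    have len: "length ys = card e" using ys distinct_card by fastforce
    have "ys \<noteq> []" using ys e by auto
    hence "hd ys \<in> e" using ys by auto
    define xs where "xs = ys @ replicate (m - card e) (hd ys)"
    have "set xs = e" using \<open>hd ys \<in> e\<close> ys by (auto simp: xs_def)
    moreover have "length xs = m" using len e by (simp add: xs_def)
    ultimately have "xs \<in> tuples V m" using e by (auto simp: tuples_def)
    thus "\<Phi> e" using H \<open>set xs = e\<close> by force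
  qed
next
  assume H: "\<forall>e. e \<subseteq> V \<and> e \<noteq> {} \<and> card e \<le> m \<longrightarrow> \<Phi> e"
  show "\<forall>xs\<in>tuples V m. \<Phi> (set xs)"
  proof
    fix xs assume "xs \<in> tuples V m"
    hence "set xs \<subseteq> V" "length xs = m" by (auto simp: tuples_def)
    moreover hence "set xs \<noteq> {}" using assms by auto
    moreover have "card (set xs) \<le> m" using card_length \<open>length xs = m\<close> by metis
    ultimately show "\<Phi> (set xs)" using H by blast
  qed
qed

lemma tprob_zero_iff:
  assumes "set xs \<subseteq> V" "\<forall>v\<in>V. 0 \<le> P v"
  shows "tprob P xs = 0 \<longleftrightarrow> \<not> set xs \<subseteq> supp V P"
  using assms unfolding tprob_def supp_def
  by (auto simp: prod_list_zero_iff less_eq_real_def subset_iff)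



definition S0 :: "nat \<Rightarrow> 'a set \<Rightarrow> 'a set set \<Rightarrow> ('a \<Rightarrow> real) \<Rightarrow> real" where
  "S0 m V E P = (\<Sum>xs\<in>tuples V m. tprob P xs * nonedge E xs)"
definition gf :: "nat \<Rightarrow> nat \<Rightarrow> 'a set \<Rightarrow> 'a set set \<Rightarrow> ('a \<Rightarrow> real) \<Rightarrow> 'a list \<Rightarrow> real" where
  "gf m l V E P xs = (\<Sum>ys\<in>tuples V (m-l). tprob P ys * nonedge E (xs@ys))"
definition Qf :: "nat \<Rightarrow> nat \<Rightarrow> 'a set \<Rightarrow> 'a set set \<Rightarrow> ('a \<Rightarrow> real) \<Rightarrow> real" where
  "Qf m l V E P = (\<Sum>xs\<in>tuples V l. tprob P xs * (gf m l V E P xs)\<^sup>2)"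

lemma I_alt: "finite V \<Longrightarrow> I_hg m V E P = -(1/real(m-1)) * log 2 (S0 m V E P)"
  unfolding I_hg_def S0_def nonedge_def
  by (simp add: sum.inter_filter finite_tuples if_distrib cong: if_cong)

lemma theta_alt: "finite V \<Longrightarrow> l \<noteq> m \<Longrightarrow>
   theta_hg m l V E P = 2 * I_hg m V E P + (1/real(m-1)) * log 2 (Qf m l V E P)"
  unfolding theta_hg_def Qf_def gf_def nonedge_def
  by (simp add: sum.inter_filter finite_tuples if_distrib cong: if_cong)

lemma nonedge_repl: "hypergraph V E \<Longrightarrow> 1 \<le> m \<Longrightarrow> nonedge E (replicate m v) = 1"
  by (auto simp: nonedge_def hypergraph_def)

lemma pm_nonneg: "pmf_on V P \<Longrightarrow> v \<in> V \<Longrightarrow> 0 \<le> P v" by (auto simp: pmf_on_def)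

lemma tuples_set: "xs \<in> tuples V k \<Longrightarrow> set xs \<subseteq> V" by (simp add: tuples_def)

lemma tprob_nn: "pmf_on V P \<Longrightarrow> xs \<in> tuples V k \<Longrightarrow> 0 \<le> tprob P xs"
  by (rule tprob_nonneg[of xs V]) (auto simp: tuples_def pmf_on_def)

lemma nonedge_bounds: "0 \<le> nonedge E xs" "nonedge E xs \<le> 1" by (auto simp: nonedge_def)

lemma D_pos:
  assumes "finite V" "pmf_on V P" shows "0 < (\<Sum>v\<in>V. P v ^ m)"
proof -
  have "\<exists>v\<in>V. P v > 0"
  proof (rule ccontr)
    assume "\<not> ?thesis"
    hence "\<forall>v\<in>V. P v = 0" using pm_nonneg[OF assms(2)] by force
    thus False using assms(2) by (simp add: pmf_on_def)
  qed
  then obtain v where v: "v \<in> V" "P v > 0" by blast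
  have "P v ^ m \<le> (\<Sum>v\<in>V. P v ^ m)"
    using v assms by (intro member_le_sum) (auto intro: zero_le_power pm_nonneg[OF assms(2)])
  moreover have "0 < P v ^ m" using v by simp
  ultimately show ?thesis by linarith
qed

lemma repl_sum:
  assumes "hypergraph V E" "1 \<le> m"
  shows "(\<Sum>xs\<in>(\<lambda>v. replicate m v) ` V. tprob P xs * nonedge E xs) = (\<Sum>v\<in>V. P v ^ m)"
proof -
  have inj: "inj_on (\<lambda>v. replicate m v) V"
    using assms(2) by (auto simp: inj_on_def)
  show ?thesis using assms
    by (simp add: sum.reindex[OF inj] nonedge_repl tprob_def)
qed

lemma repl_sub: "(\<lambda>v. replicate m v) ` V \<subseteq> tuples V m"
  by (auto simp: tuples_def)

lemma D_le_S0:
  assumes "hypergraph V E" "pmf_on V P" "1 \<le> m"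
  shows "(\<Sum>v\<in>V. P v ^ m) \<le> S0 m V E P"
proof -
  have fin: "finite V" using assms by (simp add: hypergraph_def)
  have "(\<Sum>v\<in>V. P v ^ m) = (\<Sum>xs\<in>(\<lambda>v. replicate m v) ` V. tprob P xs * nonedge E xs)"
    using repl_sum assms by metis
  also have "\<dots> \<le> S0 m V E P" unfolding S0_def
    using repl_sub[of m V] fin
    by (intro sum_mono2) (auto simp: finite_tuples intro!: mult_nonneg_nonneg tprob_nn[OF assms(2)] nonedge_bounds)
  finally show ?thesis .
qed

lemma S0_le_1:
  assumes "finite V" "pmf_on V P" shows "S0 m V E P \<le> 1"
proof -
  have "S0 m V E P \<le> (\<Sum>xs\<in>tuples V m. tprob P xs)" unfolding S0_def
    by (intro sum_mono) (metis assms(2) tprob_nn nonedge_bounds(2) mult_left_le)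
  thus ?thesis using sum_tprob assms by metis
qed

lemma g_bounds:
  assumes "finite V" "pmf_on V P"
  shows "0 \<le> gf m l V E P xs" "gf m l V E P xs \<le> 1"
proof -
  show "0 \<le> gf m l V E P xs" unfolding gf_def
    by (intro sum_nonneg) (metis assms(2) tprob_nn nonedge_bounds(1) mult_nonneg_nonneg)
  have "gf m l V E P xs \<le> (\<Sum>ys\<in>tuples V (m-l). tprob P ys)" unfolding gf_def
    by (intro sum_mono) (metis assms(2) tprob_nn nonedge_bounds(2) mult_left_le)
  thus "gf m l V E P xs \<le> 1" using sum_tprob assms by metis
qed

lemma sum_g:
  assumes "finite V" "l \<le> m"
  shows "(\<Sum>xs\<in>tuples V l. tprob P xs * gf m l V E P xs) = S0 m V E P"
proof -
  have "S0 m V E P = (\<Sum>zs\<in>tuples V (l + (m-l)). tprob P zs * nonedge E zs)"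
    using assms by (simp add: S0_def)
  also have "\<dots> = (\<Sum>xs\<in>tuples V l. \<Sum>ys\<in>tuples V (m-l). tprob P (xs@ys) * nonedge E (xs@ys))"
    by (rule sum_tuples_add[OF assms(1)])
  also have "\<dots> = (\<Sum>xs\<in>tuples V l. tprob P xs * gf m l V E P xs)"
    by (simp add: gf_def tprob_append sum_distrib_left mult.assoc)
  finally show ?thesis by simp
qed

lemma Q_bounds:
  assumes "finite V" "pmf_on V P" "l \<le> m"
  shows "(S0 m V E P)\<^sup>2 \<le> Qf m l V E P" "Qf m l V E P \<le> S0 m V E P"
proof -
  have nn: "\<forall>x\<in>tuples V l. 0 \<le> tprob P x"
    using assms tprob_nn by blast
  show "(S0 m V E P)\<^sup>2 \<le> Qf m l V E P"
    using jensen[OF finite_tuples[OF assms(1)] nn sum_tprob[OF assms(1,2)], of "gf m l V E P"]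
      sum_g[OF assms(1,3)] by (simp add: Qf_def)
  have "Qf m l V E P \<le> (\<Sum>xs\<in>tuples V l. tprob P xs * gf m l V E P xs)" unfolding Qf_def
  proof (rule sum_mono)
    fix x assume x: "x \<in> tuples V l"
    have "(gf m l V E P x)\<^sup>2 \<le> gf m l V E P x"
      using g_bounds[OF assms(1,2)] by (simp add: power2_eq_square mult_left_le)
    thus "tprob P x * (gf m l V E P x)\<^sup>2 \<le> tprob P x * gf m l V E P x"
      using nn x by (simp add: mult_left_mono)
  qed
  thus "Qf m l V E P \<le> S0 m V E P" using sum_g[OF assms(1,3)] by simp
qed

lemma nonedge_pow:
  assumes "hypergraph V E" "set X \<subseteq> tuples V n"
  shows "nonedge (conormal_E V E n) X = (\<Prod>t<n. nonedge E (col t X))"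
  using conormal_nonedge[OF assms] if_all_prod[of n "\<lambda>t. set (col t X) \<notin> E"]
  by (simp add: nonedge_def)

lemma len_of_tuples: "X \<in> tuples (tuples V n) k \<Longrightarrow> \<forall>x\<in>set X. length x = n"
  by (auto simp: tuples_def)

lemma S0_pow:
  assumes "hypergraph V E"
  shows "S0 m (tuples V n) (conormal_E V E n) (tprob P) = (S0 m V E P)^n"
proof -
  have fin: "finite V" using assms by (simp add: hypergraph_def)
  have "S0 m (tuples V n) (conormal_E V E n) (tprob P)
     = (\<Sum>X\<in>tuples (tuples V n) m. \<Prod>t<n. tprob P (col t X) * nonedge E (col t X))"
    unfolding S0_def
  proof (rule sum.cong[OF refl])
    fix X assume X: "X \<in> tuples (tuples V n) m"
    show "tprob (tprob P) X * nonedge (conormal_E V E n) X = (\<Prod>t<n. tprob P (col t X) * nonedge E (col t X))"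
      using tprob_cols[OF len_of_tuples[OF X]] nonedge_pow[OF assms tuples_set[OF X]]
      by (simp add: prod.distrib)
  qed
  also have "\<dots> = (\<Prod>t<n. S0 m V E P)"
    unfolding S0_def by (rule sum_cols[OF fin])
  finally show ?thesis by simp
qed

lemma gf_pow:
  assumes "hypergraph V E" "set X \<subseteq> tuples V n"
  shows "gf m l (tuples V n) (conormal_E V E n) (tprob P) X = (\<Prod>t<n. gf m l V E P (col t X))"
proof -
  have fin: "finite V" using assms by (simp add: hypergraph_def)
  have "gf m l (tuples V n) (conormal_E V E n) (tprob P) X
     = (\<Sum>Y\<in>tuples (tuples V n) (m-l). \<Prod>t<n. tprob P (col t Y) * nonedge E (col t X @ col t Y))"
    unfolding gf_def
  proof (rule sum.cong[OF refl])
    fix Y assume Y: "Y \<in> tuples (tuples V n) (m-l)"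
    have XY: "set (X @ Y) \<subseteq> tuples V n" using assms(2) tuples_set[OF Y] by auto
    show "tprob (tprob P) Y * nonedge (conormal_E V E n) (X @ Y) = (\<Prod>t<n. tprob P (col t Y) * nonedge E (col t X @ col t Y))"
      using tprob_cols[OF len_of_tuples[OF Y]] nonedge_pow[OF assms(1) XY]
      by (simp add: prod.distrib)
  qed
  also have "\<dots> = (\<Prod>t<n. gf m l V E P (col t X))"
    unfolding gf_def by (rule sum_cols[OF fin, where F="\<lambda>t zs. tprob P zs * nonedge E (col t X @ zs)"])
  finally show ?thesis .
qed

lemma Qf_pow:
  assumes "hypergraph V E"
  shows "Qf m l (tuples V n) (conormal_E V E n) (tprob P) = (Qf m l V E P)^n"
proof -
  have fin: "finite V" using assms by (simp add: hypergraph_def)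
  have "Qf m l (tuples V n) (conormal_E V E n) (tprob P)
     = (\<Sum>X\<in>tuples (tuples V n) l. \<Prod>t<n. tprob P (col t X) * (gf m l V E P (col t X))\<^sup>2)"
    unfolding Qf_def
  proof (rule sum.cong[OF refl])
    fix X assume X: "X \<in> tuples (tuples V n) l"
    show "tprob (tprob P) X * (gf m l (tuples V n) (conormal_E V E n) (tprob P) X)\<^sup>2 = (\<Prod>t<n. tprob P (col t X) * (gf m l V E P (col t X))\<^sup>2)"
      using tprob_cols[OF len_of_tuples[OF X]] gf_pow[OF assms tuples_set[OF X]]
      by (simp add: prod.distrib prod_power_distrib)
  qed
  also have "\<dots> = (\<Prod>t<n. Qf m l V E P)"
    unfolding Qf_def by (rule sum_cols[OF fin])
  finally show ?thesis by simp
qed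



lemma R_char:
  assumes "1 \<le> m" "xs \<in> tuples V m"
  shows "xs \<in> (\<lambda>v. replicate m v) ` V \<longleftrightarrow> card (set xs) < 2"
proof
  assume "xs \<in> (\<lambda>v. replicate m v) ` V"
  thus "card (set xs) < 2" using assms by auto
next
  assume c: "card (set xs) < 2"
  have len: "length xs = m" "set xs \<subseteq> V" using assms by (auto simp: tuples_def)
  hence ne: "set xs \<noteq> {}" using assms by auto
  hence "card (set xs) \<noteq> 0" by simp
  hence "card (set xs) = 1" using c by linarith
  then obtain v where v: "set xs = {v}" by (rule card_1_singletonE)
  hence "replicate (length xs) v = xs" by (intro replicate_length_same) auto
  thus "xs \<in> (\<lambda>v. replicate m v) ` V" using v len by (auto simp: image_iff)
qed

theorem proposition3:
  fixes V :: "'a set" and E :: "'a set set" and P :: "'a \<Rightarrow> real" and L :: nat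
  assumes hg: "hypergraph V E" and pm: "pmf_on V P" and L: "L \<ge> 1"
  shows "(\<forall>l\<in>{1..L+1}. 0 \<le> theta_hg (L+1) l V E P \<and> theta_hg (L+1) l V E P \<le> I_hg (L+1) V E P)
    \<and> (0 \<le> I_hg (L+1) V E P \<and> I_hg (L+1) V E P \<le> renyi (L+1) V P)
    \<and> (I_hg (L+1) V E P = 0 \<longleftrightarrow>
         \<not> (\<exists>e. e \<subseteq> supp V P \<and> 2 \<le> card e \<and> card e \<le> L+1 \<and> e \<in> E))
    \<and> (I_hg (L+1) V E P = renyi (L+1) V P \<longleftrightarrow>
         (\<forall>e. e \<subseteq> supp V P \<and> 2 \<le> card e \<and> card e \<le> L+1 \<longrightarrow> e \<in> E))
    \<and> (\<forall>n\<ge>2. \<forall>l\<in>{1..L+1}.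
         theta_hg (L+1) l (conormal_V V n) (conormal_E V E n) (tprob P) =
           real n * theta_hg (L+1) l V E P)"
proof -
  have fin: "finite V" using hg by (simp add: hypergraph_def)
  define m where "m = L + 1"
  have m1: "1 \<le> m" and mL: "m - 1 = L" by (auto simp: m_def)
  have Lpos: "0 < real L" using L by simp
  define S where "S = S0 m V E P"
  define D where "D = (\<Sum>v\<in>V. P v ^ m)"
  have Dpos: "0 < D" unfolding D_def by (rule D_pos[OF fin pm])
  have DS: "D \<le> S" unfolding D_def S_def by (rule D_le_S0[OF hg pm m1])
  have S1: "S \<le> 1" unfolding S_def by (rule S0_le_1[OF fin pm])
  have Spos: "0 < S" using Dpos DS by linarith
  have I_eq: "I_hg m V E P = - (log 2 S / real L)" using I_alt[OF fin] mL by (simp add: S_def)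
  have R_eq: "renyi m V P = - (log 2 D / real L)" unfolding renyi_def D_def mL by simp
  have lS: "log 2 S \<le> 0" using Spos S1 by simp
  have lDS: "log 2 D \<le> log 2 S" using Dpos Spos DS by simp
  have partI: "\<forall>l\<in>{1..m}. 0 \<le> theta_hg m l V E P \<and> theta_hg m l V E P \<le> I_hg m V E P"
  proof
    fix l assume l: "l \<in> {1..m}"
    show "0 \<le> theta_hg m l V E P \<and> theta_hg m l V E P \<le> I_hg m V E P"
    proof (cases "l = m")
      case True
      thus ?thesis using I_eq lS Lpos by (simp add: theta_hg_def divide_nonpos_pos)
    next
      case False
      define Q where "Q = Qf m l V E P"
      have lm: "l \<le> m" using l by simp
      have Q1: "S\<^sup>2 \<le> Q" "Q \<le> S" using Q_bounds[OF fin pm lm] by (simp_all add: S_def Q_def)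
      have Qpos: "0 < Q" using Q1(1) Spos by (smt (verit) zero_less_power)
      have "log 2 (S\<^sup>2) \<le> log 2 Q" using Q1(1) Qpos Spos by simp
      hence lQ1: "2 * log 2 S \<le> log 2 Q" using Spos by (simp add: log_nat_power)
      have lQ2: "log 2 Q \<le> log 2 S" using Q1(2) Qpos Spos by simp
      have th: "theta_hg m l V E P = (log 2 Q - 2 * log 2 S) / real L"
        using theta_alt[OF fin False, of E P] I_eq mL by (simp add: Q_def diff_divide_distrib)
      have b: "(log 2 Q - 2 * log 2 S) / real L \<le> (- log 2 S) / real L"
        using lQ2 Lpos by (intro divide_right_mono) auto
      have a: "0 \<le> (log 2 Q - 2 * log 2 S) / real L" using lQ1 Lpos by simp
      show ?thesis unfolding th I_eq using a b by (simp only: minus_divide_left)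
    qed
  qed
  have partII: "0 \<le> I_hg m V E P \<and> I_hg m V E P \<le> renyi m V P"
    unfolding I_eq R_eq using lS lDS Lpos by (auto intro!: divide_nonpos_pos simp: divide_le_cancel)
  have T: "finite (tuples V m)" by (rule finite_tuples[OF fin])
  have pt: "\<And>xs. xs \<in> tuples V m \<Longrightarrow> 0 \<le> tprob P xs" using tprob_nn[OF pm] by blast
  have pnn: "\<forall>v\<in>V. 0 \<le> P v" using pm by (simp add: pmf_on_def)
  have tz: "\<And>xs. xs \<in> tuples V m \<Longrightarrow> tprob P xs = 0 \<longleftrightarrow> \<not> set xs \<subseteq> supp V P"
    by (rule tprob_zero_iff[OF tuples_set pnn])
  have suppV: "supp V P \<subseteq> V" by (auto simp: supp_def)
  have e1: "I_hg m V E P = 0 \<longleftrightarrow> log 2 S = 0" unfolding I_eq using Lpos by simp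
  have e2: "log 2 S = 0 \<longleftrightarrow> S = 1"
  proof
    assume h: "log 2 S = 0"
    hence "log 2 S \<le> log 2 1" "log 2 1 \<le> log 2 S" by simp_all
    hence "S \<le> 1" "1 \<le> S" using Spos by simp_all
    thus "S = 1" by simp
  qed simp
  have "I_hg m V E P = 0 \<longleftrightarrow> S = 1" using e1 e2 by simp
  also have "\<dots> \<longleftrightarrow> (\<Sum>xs\<in>tuples V m. tprob P xs * (1 - nonedge E xs)) = 0"
    using sum_tprob[OF fin pm, of m]
    by (simp add: S_def S0_def right_diff_distrib sum_subtractf)
  also have "\<dots> \<longleftrightarrow> (\<forall>xs\<in>tuples V m. tprob P xs * (1 - nonedge E xs) = 0)"
    by (rule sum_nonneg_eq_0_iff[OF T]) (simp add: pt nonedge_bounds(2))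
  also have "\<dots> \<longleftrightarrow> (\<forall>xs\<in>tuples V m. set xs \<in> E \<longrightarrow> \<not> set xs \<subseteq> supp V P)"
    using tz by (auto simp: nonedge_def)
  also have "\<dots> \<longleftrightarrow> (\<forall>e. e \<subseteq> V \<and> e \<noteq> {} \<and> card e \<le> m \<longrightarrow> (e \<in> E \<longrightarrow> \<not> e \<subseteq> supp V P))"
    by (rule tuples_char[OF fin m1])
  also have "\<dots> \<longleftrightarrow> \<not> (\<exists>e. e \<subseteq> supp V P \<and> 2 \<le> card e \<and> card e \<le> m \<and> e \<in> E)"
  proof
    assume H: "\<forall>e. e \<subseteq> V \<and> e \<noteq> {} \<and> card e \<le> m \<longrightarrow> (e \<in> E \<longrightarrow> \<not> e \<subseteq> supp V P)"
    show "\<not> (\<exists>e. e \<subseteq> supp V P \<and> 2 \<le> card e \<and> card e \<le> m \<and> e \<in> E)"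
    proof
      assume "\<exists>e. e \<subseteq> supp V P \<and> 2 \<le> card e \<and> card e \<le> m \<and> e \<in> E"
      then obtain e where e: "e \<subseteq> supp V P" "2 \<le> card e" "card e \<le> m" "e \<in> E" by blast
      have "e \<subseteq> V" using e suppV by blast
      moreover have "e \<noteq> {}" using e(2) by auto
      ultimately show False using H e by blast
    qed
  next
    assume H: "\<not> (\<exists>e. e \<subseteq> supp V P \<and> 2 \<le> card e \<and> card e \<le> m \<and> e \<in> E)"
    show "\<forall>e. e \<subseteq> V \<and> e \<noteq> {} \<and> card e \<le> m \<longrightarrow> (e \<in> E \<longrightarrow> \<not> e \<subseteq> supp V P)"
    proof (intro allI impI)
      fix e assume e: "e \<subseteq> V \<and> e \<noteq> {} \<and> card e \<le> m" "e \<in> E"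
      have "2 \<le> card e" using hg e(2) by (simp add: hypergraph_def)
      thus "\<not> e \<subseteq> supp V P" using H e by blast
    qed
  qed
  finally have partZ: "I_hg m V E P = 0 \<longleftrightarrow> \<not> (\<exists>e. e \<subseteq> supp V P \<and> 2 \<le> card e \<and> card e \<le> m \<and> e \<in> E)" .
  define R where "R = (\<lambda>v. replicate m v) ` V"
  have RT: "R \<subseteq> tuples V m" unfolding R_def by (rule repl_sub)
  have Ssplit: "S = (\<Sum>xs\<in>tuples V m - R. tprob P xs * nonedge E xs) + D"
  proof -
    have "S = (\<Sum>xs\<in>tuples V m - R. tprob P xs * nonedge E xs) + (\<Sum>xs\<in>R. tprob P xs * nonedge E xs)"
      unfolding S_def S0_def by (rule sum.subset_diff[OF RT T])
    moreover have "(\<Sum>xs\<in>R. tprob P xs * nonedge E xs) = D"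
      unfolding R_def D_def by (rule repl_sum[OF hg m1])
    ultimately show ?thesis by simp
  qed
  have e3: "I_hg m V E P = renyi m V P \<longleftrightarrow> log 2 S = log 2 D" unfolding I_eq R_eq using Lpos
    by (simp add: divide_cancel_right)
  have e4: "log 2 S = log 2 D \<longleftrightarrow> S = D"
  proof
    assume h: "log 2 S = log 2 D"
    hence "log 2 S \<le> log 2 D" "log 2 D \<le> log 2 S" by simp_all
    hence "S \<le> D" "D \<le> S" using Spos Dpos by simp_all
    thus "S = D" by simp
  qed simp
  have "I_hg m V E P = renyi m V P \<longleftrightarrow> S = D" using e3 e4 by simp
  also have "\<dots> \<longleftrightarrow> (\<Sum>xs\<in>tuples V m - R. tprob P xs * nonedge E xs) = 0" using Ssplit by linarith
  also have "\<dots> \<longleftrightarrow> (\<forall>xs\<in>tuples V m - R. tprob P xs * nonedge E xs = 0)"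
    by (rule sum_nonneg_eq_0_iff) (use T in simp, simp add: pt nonedge_bounds(1))
  also have "\<dots> \<longleftrightarrow> (\<forall>xs\<in>tuples V m. 2 \<le> card (set xs) \<longrightarrow> set xs \<subseteq> supp V P \<longrightarrow> set xs \<in> E)"
  proof -
    have pw: "\<And>xs. xs \<in> tuples V m \<Longrightarrow> (tprob P xs * nonedge E xs = 0 \<longleftrightarrow> (set xs \<subseteq> supp V P \<longrightarrow> set xs \<in> E))"
      using tz by (auto simp: nonedge_def)
    have pr: "\<And>xs. xs \<in> tuples V m \<Longrightarrow> xs \<notin> R \<longleftrightarrow> 2 \<le> card (set xs)"
      unfolding R_def by (simp add: R_char[OF m1] not_less)
    show ?thesis
    proof
      assume H: "\<forall>xs\<in>tuples V m - R. tprob P xs * nonedge E xs = 0"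
      show "\<forall>xs\<in>tuples V m. 2 \<le> card (set xs) \<longrightarrow> set xs \<subseteq> supp V P \<longrightarrow> set xs \<in> E"
      proof (intro ballI impI)
        fix xs assume xs: "xs \<in> tuples V m" "2 \<le> card (set xs)" "set xs \<subseteq> supp V P"
        hence "xs \<in> tuples V m - R" using pr by blast
        hence "tprob P xs * nonedge E xs = 0" using H by blast
        thus "set xs \<in> E" using pw xs by blast
      qed
    next
      assume H: "\<forall>xs\<in>tuples V m. 2 \<le> card (set xs) \<longrightarrow> set xs \<subseteq> supp V P \<longrightarrow> set xs \<in> E"
      show "\<forall>xs\<in>tuples V m - R. tprob P xs * nonedge E xs = 0"
      proof
        fix xs assume xs: "xs \<in> tuples V m - R"
        hence x1: "xs \<in> tuples V m" by blast
        hence "2 \<le> card (set xs)" using pr xs by blast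
        hence "set xs \<subseteq> supp V P \<longrightarrow> set xs \<in> E" using H x1 by blast
        thus "tprob P xs * nonedge E xs = 0" using pw[OF x1] by blast
      qed
    qed
  qed
  also have "\<dots> \<longleftrightarrow> (\<forall>e. e \<subseteq> V \<and> e \<noteq> {} \<and> card e \<le> m \<longrightarrow> (2 \<le> card e \<longrightarrow> e \<subseteq> supp V P \<longrightarrow> e \<in> E))"
    by (rule tuples_char[OF fin m1])
  also have "\<dots> \<longleftrightarrow> (\<forall>e. e \<subseteq> supp V P \<and> 2 \<le> card e \<and> card e \<le> m \<longrightarrow> e \<in> E)"
  proof -
    have ne: "\<And>e. 2 \<le> card e \<Longrightarrow> e \<noteq> {}" by auto
    show ?thesis
    proof
      assume H: "\<forall>e. e \<subseteq> V \<and> e \<noteq> {} \<and> card e \<le> m \<longrightarrow> (2 \<le> card e \<longrightarrow> e \<subseteq> supp V P \<longrightarrow> e \<in> E)"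
      show "\<forall>e. e \<subseteq> supp V P \<and> 2 \<le> card e \<and> card e \<le> m \<longrightarrow> e \<in> E"
      proof (intro allI impI)
        fix e assume e: "e \<subseteq> supp V P \<and> 2 \<le> card e \<and> card e \<le> m"
        have "e \<subseteq> V" using e suppV by blast
        moreover have "e \<noteq> {}" using e ne by blast
        ultimately show "e \<in> E" using H e by blast
      qed
    next
      assume H: "\<forall>e. e \<subseteq> supp V P \<and> 2 \<le> card e \<and> card e \<le> m \<longrightarrow> e \<in> E"
      show "\<forall>e. e \<subseteq> V \<and> e \<noteq> {} \<and> card e \<le> m \<longrightarrow> (2 \<le> card e \<longrightarrow> e \<subseteq> supp V P \<longrightarrow> e \<in> E)"
        using H by blast
    qed
  qed
  finally have partR: "I_hg m V E P = renyi m V P \<longleftrightarrow> (\<forall>e. e \<subseteq> supp V P \<and> 2 \<le> card e \<and> card e \<le> m \<longrightarrow> e \<in> E)" .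
  have partP: "\<forall>n\<ge>2. \<forall>l\<in>{1..m}.
         theta_hg m l (conormal_V V n) (conormal_E V E n) (tprob P) = real n * theta_hg m l V E P"
  proof (intro allI impI ballI)
    fix n :: nat and l assume n: "2 \<le> n" and l: "l \<in> {1..m}"
    have finn: "finite (tuples V n)" by (rule finite_tuples[OF fin])
    have In: "I_hg m (tuples V n) (conormal_E V E n) (tprob P) = real n * I_hg m V E P"
      using I_alt[OF finn] S0_pow[OF hg] I_eq Spos mL
      by (simp add: S_def log_nat_power less_imp_le)
    show "theta_hg m l (conormal_V V n) (conormal_E V E n) (tprob P) = real n * theta_hg m l V E P"
    proof (cases "l = m")
      case True thus ?thesis using In by (simp add: theta_hg_def conormal_V_def)
    next
      case False
      define Q where "Q = Qf m l V E P"
      have lm: "l \<le> m" using l by simp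
      have Q1: "S\<^sup>2 \<le> Q" using Q_bounds[OF fin pm lm] by (simp_all add: S_def Q_def)
      have Qpos: "0 < Q" using Q1(1) Spos by (smt (verit) zero_less_power)
      have "theta_hg m l (conormal_V V n) (conormal_E V E n) (tprob P)
          = 2 * I_hg m (tuples V n) (conormal_E V E n) (tprob P) + (1/real(m-1)) * log 2 (Q^n)"
        using theta_alt[OF finn False] Qf_pow[OF hg] by (simp add: conormal_V_def Q_def)
      also have "\<dots> = real n * (2 * I_hg m V E P + (1/real(m-1)) * log 2 Q)"
        using In Qpos by (simp add: log_nat_power less_imp_le algebra_simps)
      also have "\<dots> = real n * theta_hg m l V E P"
        using theta_alt[OF fin False] by (simp add: Q_def)
      finally show ?thesis .
    qed
  qed
  have mm: "L + 1 = m" by (simp add: m_def)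
  show ?thesis unfolding mm by (rule conjI[OF partI conjI[OF partII conjI[OF partZ conjI[OF partR partP]]]])
qed

end
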